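(* For every $\varepsilon\in\left(0,\tfrac12\right)$, there is a (deterministic) sliding-window $(4+\varepsilon)$-approximation algorithm for the minimum vertex cover, with space $O\!\left(\varepsilon^{-1}n\log^{2}n\right)$ bits; that is, at every time the algorithm outputs a set of vertices that is a vertex cover of the graph formed by the active window $W$ and whose size is at most $(4+\varepsilon)\cdot VC(W)$.
   Context: Graph-streaming sliding-window model: a stream of edge insertions of a simple graph on $V=[n]$ ($n$ known), no edge inserted twice (so window size $w\le n^2$). The window size $w$ is known in advance; the current graph is formed by the last $w$ edges (the active window $W$). The algorithm reads the stream once in order. $VC(W)$ denotes the minimum size of a vertex cover (a vertex set meeting every edge) of the graph on $V$ with edge set $W$. *)

theory Defs
  imports Complex_Main
begin

definition valid_stream :: "nat \<Rightarrow> nat set list \<Rightarrow> bool" where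
  "valid_stream n xs \<longleftrightarrow> distinct xs \<and> (\<forall>e\<in>set xs. e \<subseteq> {..<n} \<and> card e = 2)"

definition window :: "nat \<Rightarrow> nat set list \<Rightarrow> nat set set" where
  "window w xs = set (drop (length xs - w) xs)"

definition is_vertex_cover :: "nat \<Rightarrow> nat set set \<Rightarrow> nat set \<Rightarrow> bool" where
  "is_vertex_cover n E C \<longleftrightarrow> C \<subseteq> {..<n} \<and> (\<forall>e\<in>E. e \<inter> C \<noteq> {})"

definition vc_number :: "nat \<Rightarrow> nat set set \<Rightarrow> nat" where
  "vc_number n E = Min {card C | C. is_vertex_cover n E C}"

(* A deterministic one-pass streaming algorithm whose memory is a bit string:
   initial memory, update on each arriving edge, and output read off the memory.
   Space used on a stream = length of the memory bit string at each time. *)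
definition sw_vc_algorithm ::
  "nat \<Rightarrow> nat \<Rightarrow> real \<Rightarrow> real \<Rightarrow> bool list \<Rightarrow> (bool list \<Rightarrow> nat set \<Rightarrow> bool list)
   \<Rightarrow> (bool list \<Rightarrow> nat set) \<Rightarrow> bool" where
  "sw_vc_algorithm n w approx space init step out \<longleftrightarrow>
     (\<forall>xs. valid_stream n xs \<longrightarrow>
        (let s = foldl step init xs in
           real (length s) \<le> space \<and>
           is_vertex_cover n (window w xs) (out s) \<and>
           real (card (out s)) \<le> approx * real (vc_number n (window w xs))))"

end

theory Submission
  imports Defs
begin


type_synonym inst = "nat \<times> nat set"

definition gv :: "nat set \<Rightarrow> nat set \<Rightarrow> nat set" where
  "gv V e = (if e \<inter> V = {} then V \<union> e else V)"

definition sl :: "nat set list \<Rightarrow> nat \<Rightarrow> nat \<Rightarrow> nat set list" where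
  "sl xs a b = take (b - a) (drop a xs)"

definition G :: "nat set list \<Rightarrow> nat \<Rightarrow> nat \<Rightarrow> nat set" where
  "G xs s t = foldl gv {} (sl xs s t)"

definition cnd :: "real \<Rightarrow> inst \<Rightarrow> inst \<Rightarrow> bool" where
  "cnd d a c \<longleftrightarrow> real (card (snd a)) \<le> (1 + d) * real (card (snd c))"

fun fixh :: "real \<Rightarrow> inst \<Rightarrow> inst list \<Rightarrow> inst list" where
  "fixh d a (b # c # rest) = (if cnd d a c then fixh d a (c # rest) else a # b # c # rest)"
| "fixh d a ys = a # ys"

fun prune :: "real \<Rightarrow> inst list \<Rightarrow> inst list" where
  "prune d [] = []"
| "prune d (x # xs) = fixh d x (prune d xs)"

definition upd :: "nat set \<Rightarrow> inst \<Rightarrow> inst" where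
  "upd e p = (fst p, gv (snd p) e)"

fun astep :: "real \<Rightarrow> nat \<times> inst list \<Rightarrow> nat set \<Rightarrow> nat \<times> inst list" where
  "astep d (t, L) e = (Suc t, prune d (map (upd e) (L @ [(t, {})])))"

fun aout :: "nat \<Rightarrow> nat \<times> inst list \<Rightarrow> nat set" where
  "aout w (t, L) = (if L = [] then {} else the (map_of L (Max {s \<in> fst ` set L. s \<le> t - w})))"

fun okl :: "real \<Rightarrow> inst list \<Rightarrow> bool" where
  "okl d (a # b # c # rest) = (\<not> cnd d a c \<and> okl d (b # c # rest))"
| "okl d _ = True"

lemma okl_tail': "okl d (x # xs) \<Longrightarrow> okl d xs"
proof (cases xs)
  case (Cons b r) assume h: "okl d (x # xs)"
  show ?thesis using h Cons by (cases r) auto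
qed simp

lemma okl_fixh: "okl d ys \<Longrightarrow> okl d (fixh d a ys)"
  by (induction d a ys rule: fixh.induct) (auto dest: okl_tail')

lemma okl_prune: "okl d (prune d L)"
  by (induction L) (auto intro: okl_fixh)

lemma okl_len: "d \<ge> 0 \<Longrightarrow> okl d L \<Longrightarrow> 2*j+3 \<le> length L \<Longrightarrow> (1+d)^j \<le> real (card (snd (hd L)))"
proof (induction j arbitrary: L)
  case 0
  then obtain a b c r where L: "L = a # b # c # r"
    by (cases L; cases "tl L"; cases "tl (tl L)") auto
  have "\<not> cnd d a c" using 0 L by simp
  then have "real (card (snd a)) > (1+d) * real (card (snd c))" by (simp add: cnd_def)
  moreover have "(1+d) * real (card (snd c)) \<ge> 0" using 0 by simp
  ultimately have "card (snd a) > 0" by linarith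
  then show ?case using L by simp
next
  case (Suc j)
  then obtain a b r where L: "L = a # b # r" and lr: "2*j+3 \<le> length r"
    by (cases L; cases "tl L") auto
  then obtain c r' where r: "r = c # r'" by (cases r) auto
  have ok: "okl d r" using Suc.prems L by (auto dest: okl_tail')
  have h1: "(1+d)^j \<le> real (card (snd c))" using Suc.IH[OF Suc.prems(1) ok lr] r by simp
  have "\<not> cnd d a c" using Suc.prems L r by simp
  then have h2: "real (card (snd a)) > (1+d) * real (card (snd c))" by (simp add: cnd_def)
  have "(1+d)^(Suc j) = (1+d) * (1+d)^j" by simp
  also have "\<dots> \<le> (1+d) * real (card (snd c))" using h1 Suc.prems(1) by (intro mult_left_mono) auto
  finally show ?case using h2 L by simp
qed



definition dstep :: "real \<Rightarrow> inst list \<Rightarrow> inst list \<Rightarrow> bool" where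
  "dstep d L L' \<longleftrightarrow> (\<exists>pre a b c post. L = pre @ a # b # c # post \<and> L' = pre @ a # c # post \<and> cnd d a c)"

lemma dstep_cons: "dstep d L L' \<Longrightarrow> dstep d (x # L) (x # L')"
  unfolding dstep_def by (metis append_Cons)

lemma dsteps_cons: "(dstep d)\<^sup>*\<^sup>* L L' \<Longrightarrow> (dstep d)\<^sup>*\<^sup>* (x # L) (x # L')"
  by (induction rule: rtranclp_induct) (auto intro: rtranclp.rtrancl_into_rtrancl dstep_cons)

lemma fixh_steps: "(dstep d)\<^sup>*\<^sup>* (a # ys) (fixh d a ys)"
proof (induction d a ys rule: fixh.induct)
  case (1 d a b c rest)
  show ?case
  proof (cases "cnd d a c")
    case True
    have "dstep d (a # b # c # rest) (a # c # rest)"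
      unfolding dstep_def using True by (metis append_Nil)
    then show ?thesis using 1 True by (simp add: converse_rtranclp_into_rtranclp)
  qed simp
qed simp_all

lemma prune_steps: "(dstep d)\<^sup>*\<^sup>* L (prune d L)"
proof (induction L)
  case (Cons x xs)
  have "(dstep d)\<^sup>*\<^sup>* (x # xs) (x # prune d xs)" using Cons dsteps_cons by blast
  then show ?case using fixh_steps by (simp add: rtranclp_trans)
qed simp

definition Inv :: "real \<Rightarrow> nat set list \<Rightarrow> inst list \<Rightarrow> bool" where
  "Inv d xs L \<longleftrightarrow> sorted_wrt (<) (map fst L) \<and>
     (\<forall>p\<in>set L. fst p < length xs \<and> snd p = G xs (fst p) (length xs)) \<and>
     (\<forall>T < length xs. \<exists>p\<in>set L. fst p \<le> T \<and> (\<forall>q\<in>set L. fst q \<le> T \<longrightarrow> fst q \<le> fst p) \<and>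
        (fst p = T \<or> (\<exists>s' t0. T < s' \<and> s' \<le> t0 \<and> t0 \<le> length xs \<and>
            real (card (G xs (fst p) t0)) \<le> (1+d) * real (card (G xs s' t0)))))"

lemma Inv_dstep:
  assumes I: "Inv d xs L" and D: "dstep d L L'"
  shows "Inv d xs L'"
proof -
  obtain pre a b c post where L: "L = pre @ a # b # c # post" and L': "L' = pre @ a # c # post"
    and cd: "cnd d a c" using D unfolding dstep_def by blast
  have sub: "set L' \<subseteq> set L" using L L' by auto
  have so: "sorted_wrt (<) (map fst L)" using I by (simp add: Inv_def)
  have so': "sorted_wrt (<) (map fst L')" using so L L'
    by (auto simp: sorted_wrt_append)
  have ab: "fst a < fst b" and bc: "fst b < fst c" using so L by (auto simp: sorted_wrt_append)
  have pre_lt: "\<forall>q\<in>set pre. fst q < fst a" using so L by (auto simp: sorted_wrt_append)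
  have post_gt: "\<forall>q\<in>set post. fst c < fst q" using so L by (auto simp: sorted_wrt_append)
  have P2: "\<forall>p\<in>set L'. fst p < length xs \<and> snd p = G xs (fst p) (length xs)"
    using I sub unfolding Inv_def by blast
  have P3: "\<exists>p\<in>set L'. fst p \<le> T \<and> (\<forall>q\<in>set L'. fst q \<le> T \<longrightarrow> fst q \<le> fst p) \<and>
        (fst p = T \<or> (\<exists>s' t0. T < s' \<and> s' \<le> t0 \<and> t0 \<le> length xs \<and>
            real (card (G xs (fst p) t0)) \<le> (1+d) * real (card (G xs s' t0))))"
    if T: "T < length xs" for T
  proof -
    obtain p where p: "p \<in> set L" "fst p \<le> T" "\<forall>q\<in>set L. fst q \<le> T \<longrightarrow> fst q \<le> fst p"
      "fst p = T \<or> (\<exists>s' t0. T < s' \<and> s' \<le> t0 \<and> t0 \<le> length xs \<and>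
            real (card (G xs (fst p) t0)) \<le> (1+d) * real (card (G xs s' t0)))"
      using I T unfolding Inv_def by blast
    show ?thesis
    proof (cases "p = b")
      case False
      then have "p \<in> set L'" using p(1) L L' by auto
      then show ?thesis using p sub by blast
    next
      case True
      have cT: "T < fst c"
      proof (rule ccontr)
        assume "\<not> T < fst c"
        then have "fst c \<le> fst p" using p(3) L by auto
        then show False using bc True by simp
      qed
      have aL': "a \<in> set L'" using L' by simp
      have aT: "fst a \<le> T" using ab True p(2) by simp
      have amax: "\<forall>q\<in>set L'. fst q \<le> T \<longrightarrow> fst q \<le> fst a"
        using pre_lt post_gt cT L' by fastforce
      have "fst c < length xs" "snd a = G xs (fst a) (length xs)" "snd c = G xs (fst c) (length xs)"
        using P2 L' by auto
      then have "real (card (G xs (fst a) (length xs))) \<le> (1+d) * real (card (G xs (fst c) (length xs)))"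
        using cd by (simp add: cnd_def)
      then have "\<exists>s' t0. T < s' \<and> s' \<le> t0 \<and> t0 \<le> length xs \<and>
            real (card (G xs (fst a) t0)) \<le> (1+d) * real (card (G xs s' t0))"
        using cT \<open>fst c < length xs\<close> by (intro exI[of _ "fst c"] exI[of _ "length xs"]) auto
      then show ?thesis using aL' aT amax by blast
    qed
  qed
  show ?thesis unfolding Inv_def using so' P2 P3 by blast
qed

lemma Inv_dsteps: "(dstep d)\<^sup>*\<^sup>* L L' \<Longrightarrow> Inv d xs L \<Longrightarrow> Inv d xs L'"
  by (induction rule: rtranclp_induct) (auto intro: Inv_dstep)

lemma sl_snoc_le: "t0 \<le> length xs \<Longrightarrow> sl (xs @ [e]) s t0 = sl xs s t0"
  unfolding sl_def by simp

lemma G_snoc_le: "t0 \<le> length xs \<Longrightarrow> G (xs @ [e]) s t0 = G xs s t0"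
  unfolding G_def by (simp add: sl_snoc_le)

lemma sl_snoc_new: "s \<le> length xs \<Longrightarrow> sl (xs @ [e]) s (Suc (length xs)) = sl xs s (length xs) @ [e]"
  unfolding sl_def by (simp add: Suc_diff_le)

lemma G_snoc_new: "s \<le> length xs \<Longrightarrow> G (xs @ [e]) s (Suc (length xs)) = gv (G xs s (length xs)) e"
  unfolding G_def by (simp add: sl_snoc_new)

lemma Inv_step:
  assumes I: "Inv d xs L"
  shows "Inv d (xs @ [e]) (map (upd e) (L @ [(length xs, {})]))"
proof -
  let ?L = "map (upd e) (L @ [(length xs, {})])"
  have fstL: "map fst ?L = map fst L @ [length xs]" by (simp add: upd_def comp_def)
  have so: "sorted_wrt (<) (map fst L)" and P2: "\<forall>p\<in>set L. fst p < length xs \<and> snd p = G xs (fst p) (length xs)"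
    and P3: "\<forall>T < length xs. \<exists>p\<in>set L. fst p \<le> T \<and> (\<forall>q\<in>set L. fst q \<le> T \<longrightarrow> fst q \<le> fst p) \<and>
        (fst p = T \<or> (\<exists>s' t0. T < s' \<and> s' \<le> t0 \<and> t0 \<le> length xs \<and>
            real (card (G xs (fst p) t0)) \<le> (1+d) * real (card (G xs s' t0))))"
    using I unfolding Inv_def by blast+
  have so': "sorted_wrt (<) (map fst ?L)" unfolding fstL using so P2
    by (auto simp: sorted_wrt_append)
  have P2': "\<forall>p\<in>set ?L. fst p < length (xs @ [e]) \<and> snd p = G (xs @ [e]) (fst p) (length (xs @ [e]))"
  proof
    fix p assume "p \<in> set ?L"
    then obtain q where q: "q \<in> set L \<or> q = (length xs, {})" and pq: "p = upd e q" by auto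
    have "fst q \<le> length xs" using q P2 by auto
    moreover have "snd q = G xs (fst q) (length xs)" using q P2 by (auto simp: G_def sl_def)
    ultimately show "fst p < length (xs @ [e]) \<and> snd p = G (xs @ [e]) (fst p) (length (xs @ [e]))"
      using pq by (simp add: upd_def G_snoc_new)
  qed
  have P3': "\<exists>p\<in>set ?L. fst p \<le> T \<and> (\<forall>q\<in>set ?L. fst q \<le> T \<longrightarrow> fst q \<le> fst p) \<and>
        (fst p = T \<or> (\<exists>s' t0. T < s' \<and> s' \<le> t0 \<and> t0 \<le> length (xs @ [e]) \<and>
            real (card (G (xs @ [e]) (fst p) t0)) \<le> (1+d) * real (card (G (xs @ [e]) s' t0))))"
    if T: "T < length (xs @ [e])" for T
  proof (cases "T = length xs")
    case True
    have "upd e (length xs, {}) \<in> set ?L" by simp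
    moreover have "\<forall>q\<in>set ?L. fst q \<le> length xs" using P2 by (auto simp: upd_def less_imp_le)
    ultimately show ?thesis using True by (intro bexI[of _ "upd e (length xs, {})"]) (auto simp: upd_def)
  next
    case False
    then have T': "T < length xs" using T by simp
    obtain p where p: "p \<in> set L" "fst p \<le> T" "\<forall>q\<in>set L. fst q \<le> T \<longrightarrow> fst q \<le> fst p"
      "fst p = T \<or> (\<exists>s' t0. T < s' \<and> s' \<le> t0 \<and> t0 \<le> length xs \<and>
            real (card (G xs (fst p) t0)) \<le> (1+d) * real (card (G xs s' t0)))"
      using P3 T' by blast
    have "upd e p \<in> set ?L" using p(1) by simp
    moreover have "\<forall>q\<in>set ?L. fst q \<le> T \<longrightarrow> fst q \<le> fst p" using p(3) T' by (auto simp: upd_def)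
    moreover have "fst p = T \<or> (\<exists>s' t0. T < s' \<and> s' \<le> t0 \<and> t0 \<le> length (xs @ [e]) \<and>
            real (card (G (xs @ [e]) (fst p) t0)) \<le> (1+d) * real (card (G (xs @ [e]) s' t0)))"
      using p(4) by (auto simp: G_snoc_le) (metis G_snoc_le le_SucI)
    ultimately show ?thesis using p(2) by (intro bexI[of _ "upd e p"]) (auto simp: upd_def)
  qed
  show ?thesis unfolding Inv_def using so' P2' P3' by blast
qed

lemma reach:
  "\<exists>L. foldl (astep d) (0, []) xs = (length xs, L) \<and> Inv d xs L \<and> okl d L"
proof (induction xs rule: rev_induct)
  case Nil
  show ?case by (simp add: Inv_def)
next
  case (snoc e xs)
  then obtain L where L: "foldl (astep d) (0, []) xs = (length xs, L)" "Inv d xs L" by blast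
  have "Inv d (xs @ [e]) (prune d (map (upd e) (L @ [(length xs, {})])))"
    using Inv_dsteps[OF prune_steps Inv_step[OF L(2)]] .
  then show ?case using L okl_prune by simp
qed



lemma gv_mono: "V \<subseteq> foldl gv V es"
proof (induction es arbitrary: V)
  case (Cons x es)
  have "V \<subseteq> gv V x" by (simp add: gv_def)
  then show ?case using Cons[of "gv V x"] by simp
qed simp

lemma gv_cover: "e \<in> set es \<Longrightarrow> e \<noteq> {} \<Longrightarrow> e \<inter> foldl gv V es \<noteq> {}"
proof (induction es arbitrary: V)
  case (Cons x es)
  show ?case
  proof (cases "e = x")
    case True
    have "e \<inter> gv V x \<noteq> {}" using Cons.prems True by (auto simp: gv_def)
    moreover have "gv V x \<subseteq> foldl gv (gv V x) es" by (rule gv_mono)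
    ultimately show ?thesis by auto
  next
    case False
    then show ?thesis using Cons by auto
  qed
qed simp

lemma gv_sub: "foldl gv V es \<subseteq> V \<union> \<Union>(set es)"
proof (induction es arbitrary: V)
  case (Cons x es)
  have "gv V x \<subseteq> V \<union> x" by (simp add: gv_def)
  then show ?case using Cons[of "gv V x"] by auto
qed simp

lemma gv_count:
  assumes "finite C" "finite V0" "\<forall>e\<in>set es. finite e \<and> card e = 2 \<and> e \<inter> C \<noteq> {}"
  shows "card (foldl gv V0 es) + 2 * card (C \<inter> V0) \<le> card V0 + 2 * card (C \<inter> foldl gv V0 es)"
  using assms(2,3)
proof (induction es arbitrary: V0)
  case (Cons e es)
  let ?V1 = "gv V0 e"
  have fe: "finite e" "card e = 2" "e \<inter> C \<noteq> {}" using Cons.prems by auto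
  have fV1: "finite ?V1" using Cons.prems fe by (simp add: gv_def)
  have IH: "card (foldl gv ?V1 es) + 2 * card (C \<inter> ?V1) \<le> card ?V1 + 2 * card (C \<inter> foldl gv ?V1 es)"
    using Cons.IH[OF fV1] Cons.prems(2) by (meson list.set_intros(2))
  have step: "card ?V1 + 2 * card (C \<inter> V0) \<le> card V0 + 2 * card (C \<inter> ?V1)"
  proof (cases "e \<inter> V0 = {}")
    case True
    have "V0 \<inter> e = {}" using True by blast
    then have c1: "card (V0 \<union> e) = card V0 + 2" using fe Cons.prems(1) card_Un_disjoint[of V0 e] by simp
    have "C \<inter> (V0 \<union> e) = (C \<inter> V0) \<union> (C \<inter> e)" by auto
    moreover have "(C \<inter> V0) \<inter> (C \<inter> e) = {}" using True by auto
    ultimately have "card (C \<inter> (V0 \<union> e)) = card (C \<inter> V0) + card (C \<inter> e)"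
      using assms(1) by (simp add: card_Un_disjoint)
    moreover have "card (C \<inter> e) \<ge> 1"
    proof -
      have "C \<inter> e \<noteq> {}" using fe by blast
      then show ?thesis using assms(1) by (simp add: card_gt_0_iff Suc_le_eq)
    qed
    moreover have "?V1 = V0 \<union> e" using True by (simp add: gv_def)
    ultimately show ?thesis using c1 by simp
  qed (simp add: gv_def)
  show ?case unfolding foldl_Cons using IH step by linarith
qed simp

lemma sl_split: "s \<le> t0 \<Longrightarrow> t0 \<le> t \<Longrightarrow> sl xs s t = sl xs s t0 @ sl xs t0 t"
proof -
  assume a: "s \<le> t0" "t0 \<le> t"
  have e: "t - s = (t0 - s) + (t - t0)" using a by simp
  have "take (t - s) (drop s xs) = take (t0 - s) (drop s xs) @ take (t - t0) (drop (t0 - s) (drop s xs))"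
    unfolding e by (rule take_add)
  also have "drop (t0 - s) (drop s xs) = drop t0 xs" using a by simp
  finally show ?thesis by (simp add: sl_def)
qed

lemma G_split: assumes "s \<le> t0" "t0 \<le> t" shows "G xs s t = foldl gv (G xs s t0) (sl xs t0 t)"
  unfolding G_def sl_split[OF assms] by simp

lemma sl_sub: "T \<le> a \<Longrightarrow> set (sl xs a b) \<subseteq> set (drop T xs)"
  unfolding sl_def by (meson order.trans set_drop_subset_set_drop set_take_subset)

lemma sl_full: "sl xs s (length xs) = drop s xs"
  unfolding sl_def by simp



lemma valid_prefix: "valid_stream n (xs @ [e]) \<Longrightarrow> valid_stream n xs"
  by (simp add: valid_stream_def)

lemma valid_len: assumes v: "valid_stream n xs" shows "length xs \<le> 2^n"
proof -
  have "set xs \<subseteq> Pow {..<n}" using v by (auto simp: valid_stream_def)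
  then have "card (set xs) \<le> card (Pow {..<n})" by (intro card_mono) auto
  moreover have "card (set xs) = length xs" using v by (simp add: valid_stream_def distinct_card)
  ultimately show ?thesis by (simp add: card_Pow)
qed

lemma G_sub: assumes v: "valid_stream n xs" shows "G xs s t \<subseteq> {..<n}"
proof -
  have "set (sl xs s t) \<subseteq> set xs" unfolding sl_def by (meson order.trans set_drop_subset set_take_subset)
  moreover have "\<forall>e\<in>set xs. e \<subseteq> {..<n}" using v by (simp add: valid_stream_def)
  ultimately show ?thesis using gv_sub[of "{}" "sl xs s t"] unfolding G_def by blast
qed

lemma vc_min:
  assumes "\<forall>e\<in>E. e \<subseteq> {..<n} \<and> e \<noteq> {}"
  shows "\<exists>C. is_vertex_cover n E C \<and> card C = vc_number n E"
proof -
  let ?Q = "{card C | C. is_vertex_cover n E C}"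
  have "is_vertex_cover n E {..<n}" using assms unfolding is_vertex_cover_def by (auto simp: Int_absorb2)
  then have ne: "?Q \<noteq> {}" by blast
  have "?Q \<subseteq> {..n}"
  proof
    fix x assume "x \<in> ?Q"
    then obtain C where "x = card C" "C \<subseteq> {..<n}" unfolding is_vertex_cover_def by blast
    then have "x \<le> card {..<n}" using card_mono[of "{..<n}" C] by simp
    then show "x \<in> {..n}" by simp
  qed
  then have "finite ?Q" using finite_subset by blast
  then have "Min ?Q \<in> ?Q" using ne by (rule Min_in)
  then show ?thesis unfolding vc_number_def by auto
qed

lemma out_ok:
  assumes I: "Inv d xs L" and v: "valid_stream n xs" and w: "1 \<le> w" and d: "0 \<le> d"
  shows "is_vertex_cover n (window w xs) (aout w (length xs, L)) \<and>
         real (card (aout w (length xs, L))) \<le> (4 + 2*d) * real (vc_number n (window w xs))"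
proof (cases "xs = []")
  case True
  then have "L = []" using I by (cases L) (auto simp: Inv_def)
  then show ?thesis using True d by (simp add: window_def is_vertex_cover_def)
next
  case False
  define T where "T = length xs - w"
  have T: "T < length xs" using False w unfolding T_def by simp
  have so: "sorted_wrt (<) (map fst L)" and P2: "\<forall>p\<in>set L. fst p < length xs \<and> snd p = G xs (fst p) (length xs)"
    using I unfolding Inv_def by blast+
  obtain p where p: "p \<in> set L" "fst p \<le> T" "\<forall>q\<in>set L. fst q \<le> T \<longrightarrow> fst q \<le> fst p"
    and alt: "fst p = T \<or> (\<exists>s' t0. T < s' \<and> s' \<le> t0 \<and> t0 \<le> length xs \<and>
            real (card (G xs (fst p) t0)) \<le> (1+d) * real (card (G xs s' t0)))"
    using I T unfolding Inv_def by blast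
  have dist: "distinct (map fst L)" using so by (simp add: strict_sorted_iff)
  have Mx: "Max {s \<in> fst ` set L. s \<le> T} = fst p"
    by (rule Max_eqI) (use p in auto)
  have Lne: "L \<noteq> []" using p by auto
  have "(fst p, snd p) \<in> set L" using p(1) by simp
  then have "map_of L (fst p) = Some (snd p)" using dist by (rule map_of_is_SomeI[rotated])
  then have out: "aout w (length xs, L) = G xs (fst p) (length xs)"
    using Lne Mx P2 p(1) unfolding T_def by simp
  define s where "s = fst p"
  have ve: "\<forall>e\<in>set xs. e \<subseteq> {..<n} \<and> card e = 2" using v by (simp add: valid_stream_def)
  define W where "W = window w xs"
  have W: "W = set (drop T xs)" unfolding W_def window_def T_def by simp
  have Wsub: "W \<subseteq> set xs" unfolding W by (rule set_drop_subset)
  have Wv: "\<forall>e\<in>W. e \<subseteq> {..<n} \<and> card e = 2" using ve Wsub by blast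
  have cover: "is_vertex_cover n W (G xs s (length xs))"
    unfolding is_vertex_cover_def
  proof
    show "G xs s (length xs) \<subseteq> {..<n}" using G_sub[OF v] .
    show "\<forall>e\<in>W. e \<inter> G xs s (length xs) \<noteq> {}"
    proof
      fix e assume e: "e \<in> W"
      have "e \<in> set (drop s xs)" using e W p(2) set_drop_subset_set_drop[of s T xs] unfolding s_def by blast
      moreover have "e \<noteq> {}" using Wv e by auto
      ultimately show "e \<inter> G xs s (length xs) \<noteq> {}" unfolding G_def sl_full by (rule gv_cover)
    qed
  qed
  obtain C where C: "is_vertex_cover n W C" "card C = vc_number n W"
    using vc_min[of W n] Wv by fastforce
  have fC: "finite C" using C(1) unfolding is_vertex_cover_def using finite_subset by blast
  have bound: "card (foldl gv V0 es) \<le> card V0 + 2 * card C" if "set es \<subseteq> W" "finite V0" for es V0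
  proof -
    have "\<forall>e\<in>set es. finite e \<and> card e = 2 \<and> e \<inter> C \<noteq> {}"
    proof
      fix e assume "e \<in> set es"
      then have "e \<in> W" using that by blast
      then have c2: "card e = 2" and "e \<inter> C \<noteq> {}" using Wv C(1) unfolding is_vertex_cover_def by auto
      moreover have "finite e" using c2 by (intro card_ge_0_finite) simp
      ultimately show "finite e \<and> card e = 2 \<and> e \<inter> C \<noteq> {}" by blast
    qed
    from gv_count[OF fC that(2) this]
    have "card (foldl gv V0 es) + 2 * card (C \<inter> V0) \<le> card V0 + 2 * card (C \<inter> foldl gv V0 es)" .
    moreover have "card (C \<inter> foldl gv V0 es) \<le> card C" using fC by (simp add: card_mono)
    ultimately show ?thesis by linarith
  qed
  have finG: "finite (G xs a b)" for a b using G_sub[OF v] finite_subset by blast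
  have main: "real (card (G xs s (length xs))) \<le> (4 + 2*d) * real (card C)"
  proof (cases "s = T")
    case True
    have "card (G xs s (length xs)) \<le> 0 + 2 * card C"
      unfolding G_def using bound[of "sl xs s (length xs)" "{}"] sl_sub[of T s xs "length xs"] True W by simp
    then have "real (card (G xs s (length xs))) \<le> 2 * real (card C)" by linarith
    moreover have "2 * real (card C) \<le> (4+2*d) * real (card C)" using d by (intro mult_right_mono) auto
    ultimately show ?thesis by linarith
  next
    case False
    then obtain s' t0 where st: "T < s'" "s' \<le> t0" "t0 \<le> length xs"
      and rat: "real (card (G xs s t0)) \<le> (1+d) * real (card (G xs s' t0))"
      using alt unfolding s_def by blast
    have sT: "s \<le> T" using p(2) unfolding s_def .
    have "G xs s (length xs) = foldl gv (G xs s t0) (sl xs t0 (length xs))"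
      using sT st by (intro G_split) auto
    moreover have "set (sl xs t0 (length xs)) \<subseteq> W" unfolding W using st by (intro sl_sub) auto
    moreover have "card (foldl gv (G xs s t0) (sl xs t0 (length xs))) \<le> card (G xs s t0) + 2 * card C"
      using bound[of "sl xs t0 (length xs)" "G xs s t0"] finG \<open>set (sl xs t0 (length xs)) \<subseteq> W\<close> by blast
    ultimately have b1: "card (G xs s (length xs)) \<le> card (G xs s t0) + 2 * card C"
      by simp
    have "set (sl xs s' t0) \<subseteq> W" unfolding W using st by (intro sl_sub) auto
    then have b2: "card (G xs s' t0) \<le> 0 + 2 * card C"
      unfolding G_def using bound[of "sl xs s' t0" "{}"] by simp
    have r1: "real (card (G xs s (length xs))) \<le> real (card (G xs s t0)) + 2 * real (card C)"
      using b1 by linarith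
    have r2: "(1+d) * real (card (G xs s' t0)) \<le> (1+d) * (2 * real (card C))"
      using b2 d by (intro mult_left_mono) auto
    show ?thesis using r1 r2 rat by (simp add: algebra_simps)
  qed
  show ?thesis using cover main C out unfolding W_def s_def by simp
qed



lemma log_ge1: assumes "2 \<le> n" shows "1 \<le> log 2 (real n)"
proof -
  have "(2::real) powr 1 \<le> real n" using assms by simp
  then show ?thesis using assms by (subst le_log_iff) auto
qed

lemma pow_big:
  assumes e: "0 < \<epsilon>" "\<epsilon> < 1/2" and n: "2 \<le> n"
  shows "real n < (1 + \<epsilon>/2) ^ (nat \<lceil>2/\<epsilon>\<rceil> * (nat \<lceil>log 2 (real n)\<rceil> + 1))"
proof -
  define r where "r = nat \<lceil>2/\<epsilon>\<rceil>"
  define k where "k = nat \<lceil>log 2 (real n)\<rceil> + 1"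
  have "2/\<epsilon> \<le> real r" unfolding r_def by linarith
  then have rd: "1 \<le> real r * (\<epsilon>/2)" using e by (simp add: field_simps)
  have "1 + real r * (\<epsilon>/2) \<le> (1 + \<epsilon>/2)^r" by (rule Bernoulli_inequality) (use e in simp)
  then have b2: "2 \<le> (1 + \<epsilon>/2)^r" using rd by linarith
  have "(2::real)^k \<le> ((1 + \<epsilon>/2)^r)^k" using b2 by (intro power_mono) auto
  then have p1: "(2::real)^k \<le> (1 + \<epsilon>/2)^(r*k)" by (simp add: power_mult)
  have lg0: "0 \<le> log 2 (real n)" using log_ge1[OF n] by simp
  have "log 2 (real n) < real k" unfolding k_def using lg0 by linarith
  then have "(2::real) powr (log 2 (real n)) < 2 powr (real k)" by (intro powr_less_mono) auto
  then have "real n < 2 ^ k" using n by (simp add: powr_realpow)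
  then show ?thesis using p1 unfolding r_def k_def by linarith
qed

lemma space_bound:
  assumes e: "0 < \<epsilon>" "\<epsilon> < 1/2" and n: "2 \<le> n"
  shows "real ((2 * (nat \<lceil>2/\<epsilon>\<rceil> * (nat \<lceil>log 2 (real n)\<rceil> + 1)) + 2 + 1) * (2*n+2))
         \<le> 100 / \<epsilon> * real n * (log 2 (real n))^2"
proof -
  define r where "r = nat \<lceil>2/\<epsilon>\<rceil>"
  define k where "k = nat \<lceil>log 2 (real n)\<rceil> + 1"
  define q where "q = 1/\<epsilon>"
  define Lg where "Lg = log 2 (real n)"
  have q2: "2 \<le> q" unfolding q_def using e by (simp add: field_simps)
  have L1: "1 \<le> Lg" unfolding Lg_def by (rule log_ge1[OF n])
  have "real r = of_int \<lceil>2/\<epsilon>\<rceil>" unfolding r_def using e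
    by (simp add: of_nat_nat)
  also have "\<dots> \<le> 2/\<epsilon> + 1" by simp
  finally have r1: "real r \<le> 2*q + 1" unfolding q_def by simp
  have r2: "real r \<le> 5/2 * q" using r1 q2 by linarith
  have "real k = of_int \<lceil>Lg\<rceil> + 1" unfolding k_def Lg_def using L1
    by (simp add: of_nat_nat Lg_def)
  also have "\<dots> \<le> Lg + 2" using of_int_ceiling_le_add_one[of Lg] by linarith
  finally have k2: "real k \<le> 3 * Lg" using L1 by linarith
  have rk: "real r * real k \<le> (5/2 * q) * (3 * Lg)"
    using r2 k2 q2 L1 by (intro mult_mono) auto
  have "q * 1 \<le> q * Lg" using q2 L1 by (intro mult_left_mono) auto
  then have qL: "2 \<le> q * Lg" using q2 by linarith
  have m: "real (2 * (r * k) + 2 + 1) \<le> 17 * q * Lg"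
    using rk qL by simp
  have nn: "real (2*n+2) \<le> 3 * real n" using n by simp
  have "real ((2 * (r * k) + 2 + 1) * (2*n+2)) = real (2 * (r * k) + 2 + 1) * real (2*n+2)" by (rule of_nat_mult)
  also have "\<dots> \<le> (17 * q * Lg) * (3 * real n)"
    using m nn qL by (intro mult_mono) (auto simp: mult.commute)
  also have "\<dots> = 51 * q * real n * Lg" by simp
  also have "\<dots> \<le> 51 * q * real n * Lg^2"
    using q2 L1 by (intro mult_left_mono) (auto simp: power2_eq_square)
  also have "\<dots> \<le> 100 * q * real n * Lg^2"
    using q2 by (intro mult_right_mono) auto
  finally show ?thesis unfolding r_def k_def q_def Lg_def by simp
qed


lemma card_lists_le_bound:
  assumes "finite A" "card A \<ge> 1"
  shows "card {xs. set xs \<subseteq> A \<and> length xs \<le> M} \<le> (M+1) * card A ^ M"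
proof -
  have "(\<Sum>i\<le>M. card A ^ i) \<le> (\<Sum>i\<le>M. card A ^ M)"
    by (intro sum_mono power_increasing) (use assms in auto)
  then show ?thesis using card_lists_length_le[OF assms(1)] by simp
qed

lemma card_S:
  fixes n M :: nat
  defines "A \<equiv> {..(2::nat)^n} \<times> Pow {..<n}"
  shows "finite ({..(2::nat)^n} \<times> {L. set L \<subseteq> A \<and> length L \<le> M})"
    and "card ({..(2::nat)^n} \<times> {L. set L \<subseteq> A \<and> length L \<le> M}) \<le> 2 ^ ((M+1)*(2*n+2))"
proof -
  have fA: "finite A" unfolding A_def by simp
  have cA: "card A = (2^n + 1) * 2^n" unfolding A_def by (simp add: card_cartesian_product card_Pow)
  have N1: "(2::nat)^n + 1 \<le> 2^(n+1)" by simp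
  have cA2: "card A \<le> 2^(2*n+1)"
  proof -
    have "card A \<le> 2^(n+1) * 2^n" unfolding cA using N1 by (intro mult_right_mono) auto
    also have "\<dots> = 2^(2*n+1)" by (simp add: power_add mult_2 distrib_right)
    finally show ?thesis .
  qed
  have cA1: "card A \<ge> 1" unfolding cA by (simp add: Suc_le_eq)
  show "finite ({..(2::nat)^n} \<times> {L. set L \<subseteq> A \<and> length L \<le> M})"
    using finite_lists_length_le[OF fA] by simp
  have "card ({..(2::nat)^n} \<times> {L. set L \<subseteq> A \<and> length L \<le> M})
        = (2^n+1) * card {L. set L \<subseteq> A \<and> length L \<le> M}"
    by (simp add: card_cartesian_product)
  also have "\<dots> \<le> 2^(n+1) * ((M+1) * card A ^ M)"
    using N1 card_lists_le_bound[OF fA cA1, of M] by (intro mult_mono) auto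
  also have "\<dots> \<le> 2^(n+1) * (2^M * (2^(2*n+1))^M)"
  proof -
    have "M + 1 \<le> 2^M" by (simp add: Suc_leI)
    moreover have "card A ^ M \<le> (2^(2*n+1))^M" using cA2 by (rule power_mono) simp
    ultimately show ?thesis by (intro mult_left_mono mult_mono) auto
  qed
  also have "\<dots> = 2^(n+1) * (2^M * 2^((2*n+1)*M))" by (simp only: power_mult)
  also have "\<dots> = 2^(n + 1 + M + (2*n+1)*M)" by (simp only: power_add[symmetric] add.assoc)
  also have "\<dots> \<le> 2^((M+1)*(2*n+2))" by (intro power_increasing) (auto simp: algebra_simps)
  finally show "card ({..(2::nat)^n} \<times> {L. set L \<subseteq> A \<and> length L \<le> M}) \<le> 2 ^ ((M+1)*(2*n+2))" .
qed



theorem theorem4p6: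
  shows "\<exists>K>0. \<forall>\<epsilon>::real. 0 < \<epsilon> \<and> \<epsilon> < 1/2 \<longrightarrow>
           (\<forall>n w. 2 \<le> n \<and> 1 \<le> w \<and> w \<le> n^2 \<longrightarrow>
              (\<exists>init step out. sw_vc_algorithm n w (4 + \<epsilon>)
                  (K / \<epsilon> * real n * (log 2 (real n))^2) init step out))"
proof (rule exI[of _ 100], intro conjI allI impI)
  show "(0::real) < 100" by simp
next
  fix \<epsilon> :: real and n w :: nat
  assume eps: "0 < \<epsilon> \<and> \<epsilon> < 1/2" and nw: "2 \<le> n \<and> 1 \<le> w \<and> w \<le> n^2"
  have e1: "0 < \<epsilon>" "\<epsilon> < 1/2" and n2: "2 \<le> n" and w1: "1 \<le> w" using eps nw by auto
  define d where "d = \<epsilon>/2"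
  have d0: "0 \<le> d" unfolding d_def using e1 by simp
  define r where "r = nat \<lceil>2/\<epsilon>\<rceil>"
  define k where "k = nat \<lceil>log 2 (real n)\<rceil> + 1"
  define M where "M = 2 * (r * k) + 2"
  define B where "B = (M+1)*(2*n+2)"
  define A where "A = {..(2::nat)^n} \<times> Pow {..<n}"
  define S where "S = {..(2::nat)^n} \<times> {L. set L \<subseteq> A \<and> length L \<le> M}"
  have finS: "finite S" and cardS: "card S \<le> 2^B"
    using card_S[of n M] unfolding S_def A_def B_def by auto
  have big: "real n < (1 + d) ^ (r * k)" using pow_big[OF e1 n2] unfolding d_def r_def k_def .
  have sp: "real B \<le> 100 / \<epsilon> * real n * (log 2 (real n))^2"
    using space_bound[OF e1 n2] unfolding B_def M_def r_def k_def .
  have inS: "foldl (astep d) (0, []) xs \<in> S" if v: "valid_stream n xs" for xs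
  proof -
    obtain L where L: "foldl (astep d) (0, []) xs = (length xs, L)" "Inv d xs L" "okl d L"
      using reach[of d xs] by blast
    have P2: "\<forall>p\<in>set L. fst p < length xs \<and> snd p = G xs (fst p) (length xs)"
      using L(2) unfolding Inv_def by blast
    have lx: "length xs \<le> 2^n" using valid_len[OF v] .
    have cards: "card (snd p) \<le> n" if "p \<in> set L" for p
    proof -
      have "snd p \<subseteq> {..<n}" using P2 that G_sub[OF v] by auto
      then show ?thesis using card_mono[of "{..<n}" "snd p"] by simp
    qed
    have setL: "set L \<subseteq> A"
    proof
      fix p assume p: "p \<in> set L"
      have "fst p \<le> 2^n" using P2 p lx by fastforce
      moreover have "snd p \<subseteq> {..<n}" using P2 p G_sub[OF v] by auto
      ultimately show "p \<in> A" unfolding A_def by (cases p) auto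
    qed
    have lenL: "length L \<le> M"
    proof (rule ccontr)
      assume "\<not> length L \<le> M"
      then have ge: "2 * (r * k) + 3 \<le> length L" unfolding M_def by simp
      then have "L \<noteq> []" by auto
      then have "hd L \<in> set L" by simp
      then have "card (snd (hd L)) \<le> n" by (rule cards)
      moreover have "(1+d)^(r*k) \<le> real (card (snd (hd L)))" using okl_len[OF d0 L(3) ge] .
      ultimately show False using big by linarith
    qed
    show ?thesis unfolding L(1) S_def using lx setL lenL by simp
  qed
  define Bl where "Bl = {bs :: bool list. set bs \<subseteq> UNIV \<and> length bs = B}"
  have finBl: "finite Bl" unfolding Bl_def by (rule finite_lists_length_eq) simp
  have cardBl: "card Bl = 2^B" unfolding Bl_def
    using card_lists_length_eq[of "UNIV :: bool set" B] by (simp only: card_UNIV_bool finite_UNIV)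
  obtain enc where enc: "enc ` S \<subseteq> Bl" "inj_on enc S"
    using card_le_inj[OF finS finBl] cardS cardBl by auto
  define dec where "dec = the_inv_into S enc"
  define init where "init = enc (0, [])"
  define step where "step = (\<lambda>bs e. enc (astep d (dec bs) e))"
  define out where "out = (\<lambda>bs. aout w (dec bs))"
  have sim: "valid_stream n xs \<Longrightarrow> foldl step init xs = enc (foldl (astep d) (0, []) xs)" for xs
  proof (induction xs rule: rev_induct)
    case Nil
    show ?case by (simp add: init_def)
  next
    case (snoc e xs)
    have v: "valid_stream n xs" using valid_prefix[OF snoc.prems] .
    have X: "foldl (astep d) (0, []) xs \<in> S" using inS[OF v] .
    have "foldl step init (xs @ [e]) = step (enc (foldl (astep d) (0, []) xs)) e"
      using snoc.IH[OF v] by simp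
    also have "\<dots> = enc (astep d (foldl (astep d) (0, []) xs) e)"
      unfolding step_def dec_def using the_inv_into_f_f[OF enc(2) X] by simp
    finally show ?case by simp
  qed
  show "\<exists>init step out. sw_vc_algorithm n w (4 + \<epsilon>)
                  (100 / \<epsilon> * real n * (log 2 (real n))^2) init step out"
  proof (intro exI[of _ init] exI[of _ step] exI[of _ out])
    show "sw_vc_algorithm n w (4 + \<epsilon>) (100 / \<epsilon> * real n * (log 2 (real n))^2) init step out"
      unfolding sw_vc_algorithm_def Let_def
    proof (intro allI impI)
      fix xs assume v: "valid_stream n xs"
      obtain L where L: "foldl (astep d) (0, []) xs = (length xs, L)" "Inv d xs L"
        using reach[of d xs] by blast
      have X: "foldl (astep d) (0, []) xs \<in> S" using inS[OF v] .
      have fs: "foldl step init xs = enc (length xs, L)" using sim[OF v] L(1) by simp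
      have XS: "(length xs, L) \<in> S" using X L(1) by simp
      have len: "length (foldl step init xs) = B" using fs enc(1) XS unfolding Bl_def by auto
      have o: "out (foldl step init xs) = aout w (length xs, L)"
        unfolding fs out_def dec_def using the_inv_into_f_f[OF enc(2) XS] by simp
      have ok: "is_vertex_cover n (window w xs) (aout w (length xs, L)) \<and>
         real (card (aout w (length xs, L))) \<le> (4 + 2*d) * real (vc_number n (window w xs))"
        using out_ok[OF L(2) v w1 d0] .
      have "4 + 2*d = 4 + \<epsilon>" unfolding d_def by simp
      then show "real (length (foldl step init xs)) \<le> 100 / \<epsilon> * real n * (log 2 (real n))^2 \<and>
         is_vertex_cover n (window w xs) (out (foldl step init xs)) \<and>
         real (card (out (foldl step init xs))) \<le> (4 + \<epsilon>) * real (vc_number n (window w xs))"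
        using len sp o ok by simp
    qed
  qed
qed


end
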